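(* Let $\{S_0,S_1,\dots,S_m\}$ be an admissible cover of $S=S_{p,q}$. Then for every $\ell\in\{0,1,\dots,m\}$, either $\mathbb V_{\mathbb F}\big(\bigcup_{i=0}^{\ell-1}S_i\big)=\varnothing$, or for every $\mathbf s\in \mathbb V_{\mathbb F}\big(\bigcup_{i=0}^{\ell-1}S_i\big)$ we have $$\mathbb V_{\mathbb F}\Big(\bigcup_{i=0}^{\ell}S_i\Big)=\mathbb V_{\mathbb F}\Big(\bigcup_{i=0}^{\ell}L_{\mathbf a=\mathbf s}(S_i)\Big).$$ (For $\ell=0$ the union $\bigcup_{i=0}^{-1}S_i$ is empty and its zero set is $\mathbb F^n$.)
   Context: Let $\mathbb F$ be a field of characteristic zero, $\mathbf x=(x_1,\dots,x_n)$ variables and $\mathbf a=(a_1,\dots,a_n)$ new indeterminates. For $p,q\in\mathbb F[\mathbf x]$ write $p(\mathbf x+\mathbf a)-q(\mathbf x)=\sum_{\alpha\in\mathbb N^n}c_\alpha(\mathbf a)\mathbf x^\alpha$ with $c_\alpha(\mathbf a)\in\mathbb F[\mathbf a]$, and let $S=S_{p,q}$ be the family of nonzero coefficients $c_\alpha(\mathbf a)$ (indexed by $\alpha$ with $\mathbf x^\alpha$ in the support of $p(\mathbf x+\mathbf a)-q(\mathbf x)$). On $\mathbb N^n$, $\beta\ge\alpha$ means $\beta_i\ge\alpha_i$ for all $i$, and $\beta>\alpha$ means $\beta\ge\alpha$, $\beta\neq\alpha$. A cover of $S$ is a collection $\{S_0,\dots,S_m\}$ of subsets whose union is $S$. It is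 admissible if (1) every polynomial in $S_0$ has total degree at most one in $\mathbf a$; and (2) for every $\ell=1,\dots,m$, if $c_\alpha\in S_\ell$ then $c_\beta\in\bigcup_{i=0}^{\ell-1}S_i$ for all $\beta>\alpha$ with $c_\beta\neq 0$. For $f\in\mathbb F[\mathbf a]$ let $f=\sum_{i\ge0}H^i(f)$ be its decomposition into homogeneous components in $\mathbf a$ ($H^i(f)$ homogeneous of degree $i$). For $\mathbf s\in\mathbb F^n$, the linearization of $f$ at $\mathbf s$ is $L_{\mathbf a=\mathbf s}(f)=H^0(f)+H^1(f)(\mathbf a)+\sum_{i\ge2}H^i(f)(\mathbf s)$, and for a set $P$ of polynomials $L_{\mathbf a=\mathbf s}(P)=\{L_{\mathbf a=\mathbf s}(f):f\in P\}$. For $P\subseteq\mathbb F[\mathbf a]$, $\mathbb V_{\mathbb F}(P)=\{\mathbf v\in\mathbb F^n: f(\mathbf v)=0\ \forall f\in P\}$. *)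

theory Defs
  imports Main "HOL-Library.Poly_Mapping" "HOL-Library.Function_Algebras"
begin

text \<open>Multivariate polynomials over a field 'a in variables indexed by a finite type 'v:
  a polynomial is a finitely supported map from exponent vectors ('v \<Rightarrow> nat) to
  coefficients.  The pointwise order on exponent vectors is the order on functions.\<close>

type_synonym ('v, 'a) mpoly = "('v \<Rightarrow> nat) \<Rightarrow>\<^sub>0 'a"

definition mp_const :: "'a::zero \<Rightarrow> ('v, 'a) mpoly" where
  "mp_const c = Poly_Mapping.single 0 c"

definition mp_var :: "'v \<Rightarrow> ('v, 'a::{zero,one}) mpoly" where
  "mp_var i = Poly_Mapping.single (\<lambda>j. if j = i then 1 else 0) 1"

definition mon_eval :: "('v::finite \<Rightarrow> 'a::comm_semiring_1) \<Rightarrow> ('v \<Rightarrow> nat) \<Rightarrow> 'a" where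
  "mon_eval v \<alpha> = (\<Prod>i\<in>UNIV. v i ^ \<alpha> i)"

definition mp_eval :: "('v::finite, 'a::comm_semiring_1) mpoly \<Rightarrow> ('v \<Rightarrow> 'a) \<Rightarrow> 'a" where
  "mp_eval f v = (\<Sum>\<alpha>\<in>Poly_Mapping.keys f. Poly_Mapping.lookup f \<alpha> * mon_eval v \<alpha>)"

text \<open>Total degree of a monomial / of a polynomial (the zero polynomial gets degree 0).\<close>
definition mon_deg :: "('v::finite \<Rightarrow> nat) \<Rightarrow> nat" where
  "mon_deg \<alpha> = (\<Sum>i\<in>UNIV. \<alpha> i)"

definition mp_deg :: "('v::finite, 'a::zero) mpoly \<Rightarrow> nat" where
  "mp_deg f = Max (insert 0 (mon_deg ` Poly_Mapping.keys f))"

definition hom_comp :: "nat \<Rightarrow> ('v::finite, 'a::comm_monoid_add) mpoly \<Rightarrow> ('v, 'a) mpoly" where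
  "hom_comp k f = (\<Sum>\<alpha>\<in>{\<alpha>\<in>Poly_Mapping.keys f. mon_deg \<alpha> = k}. Poly_Mapping.single \<alpha> (Poly_Mapping.lookup f \<alpha>))"

definition linearize :: "('v::finite \<Rightarrow> 'a::comm_semiring_1) \<Rightarrow> ('v, 'a) mpoly \<Rightarrow> ('v, 'a) mpoly" where
  "linearize s f = hom_comp 0 f + hom_comp 1 f
     + (\<Sum>i\<in>{2..mp_deg f}. mp_const (mp_eval (hom_comp i f) s))"

definition zero_set :: "('v::finite, 'a::comm_semiring_1) mpoly set \<Rightarrow> ('v \<Rightarrow> 'a) set" where
  "zero_set P = {v. \<forall>f\<in>P. mp_eval f v = 0}"

text \<open>p(x + a) as a polynomial in the 2n variables x (Inl) and a (Inr),
  obtained by substituting x_i + a_i for x_i in p.\<close>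
definition shifted :: "('v::finite, 'a::comm_ring_1) mpoly \<Rightarrow> ('v + 'v, 'a) mpoly" where
  "shifted p = (\<Sum>\<beta>\<in>Poly_Mapping.keys p. mp_const (Poly_Mapping.lookup p \<beta>)
       * (\<Prod>i\<in>UNIV. (mp_var (Inl i) + mp_var (Inr i)) ^ \<beta> i))"

text \<open>The coefficient c_\<alpha>(a) \<in> F[a] of x^\<alpha> in p(x+a) - q(x).\<close>
definition shift_coeff :: "('v::finite, 'a::comm_ring_1) mpoly \<Rightarrow> ('v, 'a) mpoly
     \<Rightarrow> ('v \<Rightarrow> nat) \<Rightarrow> ('v, 'a) mpoly" where
  "shift_coeff p q \<alpha> =
     (\<Sum>\<gamma>\<in>{\<gamma>\<in>Poly_Mapping.keys (shifted p). (\<lambda>i. \<gamma> (Inl i)) = \<alpha>}.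
         Poly_Mapping.single (\<lambda>i. \<gamma> (Inr i)) (Poly_Mapping.lookup (shifted p) \<gamma>))
     - mp_const (Poly_Mapping.lookup q \<alpha>)"

definition supp_S :: "('v::finite, 'a::comm_ring_1) mpoly \<Rightarrow> ('v, 'a) mpoly \<Rightarrow> ('v \<Rightarrow> nat) set" where
  "supp_S p q = {\<alpha>. shift_coeff p q \<alpha> \<noteq> 0}"

text \<open>Admissible cover, given by index sets C 0, ..., C m (C l \<subseteq> supp_S p q stands
  for the subfamily S_l = {c_\<alpha> : \<alpha> \<in> C l}).\<close>
definition admissible_cover :: "('v::finite, 'a::comm_ring_1) mpoly \<Rightarrow> ('v, 'a) mpoly
     \<Rightarrow> nat \<Rightarrow> (nat \<Rightarrow> ('v \<Rightarrow> nat) set) \<Rightarrow> bool" where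
  "admissible_cover p q m C \<longleftrightarrow>
     (\<Union>i\<in>{0..m}. C i) = supp_S p q \<and>
     (\<forall>\<alpha>\<in>C 0. mp_deg (shift_coeff p q \<alpha>) \<le> 1) \<and>
     (\<forall>l\<in>{1..m}. \<forall>\<alpha>\<in>C l. \<forall>\<beta>. \<beta> > \<alpha> \<and> shift_coeff p q \<beta> \<noteq> 0
         \<longrightarrow> \<beta> \<in> (\<Union>i\<in>{0..<l}. C i))"

end

theory Submission imports Defs "HOL-Library.FuncSet" "HOL-Computational_Algebra.Polynomial" begin

lemma single_power: "(Poly_Mapping.single a (c::'a::comm_semiring_1)) ^ k
   = Poly_Mapping.single (\<lambda>z. k * a z) (c ^ k)"
proof (induction k)
  case 0
  have "(\<lambda>z. 0 * a z) = 0" by (simp add: fun_eq_iff)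
  then show ?case by simp
next
  case (Suc k)
  have "a + (\<lambda>z. k * a z) = (\<lambda>z. Suc k * a z)" by (simp add: fun_eq_iff)
  then show ?case by (simp add: Suc mult_single)
qed

lemma prod_single: "finite A \<Longrightarrow> (\<Prod>i\<in>A. Poly_Mapping.single (a i) (c i :: 'a::comm_semiring_1))
   = Poly_Mapping.single (\<Sum>i\<in>A. a i) (\<Prod>i\<in>A. c i)"
  by (induction A rule: finite_induct) (auto simp: mult_single)

definition Cb :: "('v::finite \<Rightarrow> nat) \<Rightarrow> ('v \<Rightarrow> nat) \<Rightarrow> nat" where
  "Cb \<mu> \<alpha> = (\<Prod>i\<in>UNIV. \<mu> i choose \<alpha> i)"

definition Jx :: "'v \<Rightarrow> nat \<Rightarrow> nat \<Rightarrow> ('v + 'v) \<Rightarrow> nat" where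
  "Jx i k n = (\<lambda>z. case z of Inl j \<Rightarrow> (if j = i then k else 0) | Inr j \<Rightarrow> (if j = i then n - k else 0))"

lemma binom_var: "(mp_var (Inl i) + mp_var (Inr i) :: ('v + 'v, 'a::comm_semiring_1) mpoly) ^ n
   = (\<Sum>k\<le>n. Poly_Mapping.single (Jx i k n) (of_nat (n choose k)))"
proof -
  have "(mp_var (Inl i) + mp_var (Inr i) :: ('v + 'v, 'a) mpoly) ^ n
     = (\<Sum>k\<le>n. of_nat (n choose k) * mp_var (Inl i) ^ k * mp_var (Inr i) ^ (n - k))"
    by (rule binomial_ring)
  also have "\<dots> = (\<Sum>k\<le>n. Poly_Mapping.single (Jx i k n) (of_nat (n choose k)))"
  proof (rule sum.cong[OF refl])
    fix k assume "k \<in> {..n}"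
    have e: "(of_nat (n choose k) :: ('v + 'v, 'a) mpoly) = Poly_Mapping.single 0 (of_nat (n choose k))"
      by (simp only: single_of_nat)
    have x: "0 + (\<lambda>z. k * (if z = Inl i then 1 else 0)) + (\<lambda>z. (n - k) * (if z = Inr i then 1 else 0)) = Jx i k n"
    proof
      fix z show "(0 + (\<lambda>z. k * (if z = Inl i then 1 else 0)) + (\<lambda>z. (n - k) * (if z = Inr i then 1 else 0))) z = Jx i k n z"
        by (cases z) (auto simp: Jx_def)
    qed
    have "of_nat (n choose k) * mp_var (Inl i) ^ k * mp_var (Inr i) ^ (n - k)
        = (Poly_Mapping.single (0 + (\<lambda>z. k * (if z = Inl i then 1 else 0)) + (\<lambda>z. (n - k) * (if z = Inr i then 1 else 0)))
             (of_nat (n choose k) * 1 ^ k * 1 ^ (n-k)) :: ('v + 'v, 'a) mpoly)"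
      unfolding mp_var_def single_power e mult_single by (rule refl)
    then show "of_nat (n choose k) * mp_var (Inl i) ^ k * mp_var (Inr i) ^ (n - k)
        = (Poly_Mapping.single (Jx i k n) (of_nat (n choose k)) :: ('v + 'v, 'a) mpoly)"
      unfolding x by simp
  qed
  finally show ?thesis .
qed


definition JJ :: "('v \<Rightarrow> nat) \<Rightarrow> ('v \<Rightarrow> nat) \<Rightarrow> ('v + 'v) \<Rightarrow> nat" where
  "JJ \<beta> \<kappa> = (\<lambda>z. case z of Inl j \<Rightarrow> \<kappa> j | Inr j \<Rightarrow> \<beta> j - \<kappa> j)"

lemma sum_fun_apply: "finite A \<Longrightarrow> (\<Sum>i\<in>A. f i) (z::'b) = (\<Sum>i\<in>A. f i z :: 'c::comm_monoid_add)"
  by (induction A rule: finite_induct) auto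

lemma sum_Jx: "(\<Sum>i\<in>UNIV. Jx i (\<kappa> i) (\<beta> i)) = JJ \<beta> (\<kappa>::'v::finite \<Rightarrow> nat)"
proof
  fix z
  have "(\<Sum>i\<in>UNIV. Jx i (\<kappa> i) (\<beta> i)) z = (\<Sum>i\<in>UNIV. Jx i (\<kappa> i) (\<beta> i) z)"
    by (rule sum_fun_apply) simp
  also have "\<dots> = JJ \<beta> \<kappa> z"
  proof (cases z)
    case (Inl j)
    have "(\<Sum>i\<in>UNIV. Jx i (\<kappa> i) (\<beta> i) z) = (\<Sum>i\<in>UNIV. if i = j then \<kappa> i else 0)"
      by (rule sum.cong) (auto simp: Jx_def Inl)
    also have "\<dots> = \<kappa> j" by simp
    finally show ?thesis by (simp add: JJ_def Inl)
  next
    case (Inr j)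
    have "(\<Sum>i\<in>UNIV. Jx i (\<kappa> i) (\<beta> i) z) = (\<Sum>i\<in>UNIV. if i = j then \<beta> i - \<kappa> i else 0)"
      by (rule sum.cong) (auto simp: Jx_def Inr)
    also have "\<dots> = \<beta> j - \<kappa> j" by simp
    finally show ?thesis by (simp add: JJ_def Inr)
  qed
  finally show "(\<Sum>i\<in>UNIV. Jx i (\<kappa> i) (\<beta> i)) z = JJ \<beta> \<kappa> z" .
qed

lemma prod_binom_var: "(\<Prod>i\<in>UNIV. (mp_var (Inl i) + mp_var (Inr i) :: ('v::finite + 'v, 'a::comm_semiring_1) mpoly) ^ \<beta> i)
   = (\<Sum>\<kappa>\<in>PiE UNIV (\<lambda>i. {..\<beta> i}). Poly_Mapping.single (JJ \<beta> \<kappa>) (of_nat (Cb \<beta> \<kappa>)))"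
proof -
  have "(\<Prod>i\<in>UNIV. (mp_var (Inl i) + mp_var (Inr i) :: ('v + 'v, 'a) mpoly) ^ \<beta> i)
      = (\<Prod>i\<in>UNIV. \<Sum>k\<le>\<beta> i. Poly_Mapping.single (Jx i k (\<beta> i)) (of_nat (\<beta> i choose k)))"
    by (simp add: binom_var)
  also have "\<dots> = (\<Sum>\<kappa>\<in>PiE UNIV (\<lambda>i. {..\<beta> i}). \<Prod>i\<in>UNIV. Poly_Mapping.single (Jx i (\<kappa> i) (\<beta> i)) (of_nat (\<beta> i choose \<kappa> i)))"
    by (rule prod_sum_PiE) auto
  also have "\<dots> = (\<Sum>\<kappa>\<in>PiE UNIV (\<lambda>i. {..\<beta> i}). Poly_Mapping.single (JJ \<beta> \<kappa>) (of_nat (Cb \<beta> \<kappa>)))"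
    by (simp add: prod_single sum_Jx Cb_def)
  finally show ?thesis .
qed

lemma shifted_expand: "shifted (p :: ('v::finite, 'a::comm_ring_1) mpoly) =
  (\<Sum>\<beta>\<in>Poly_Mapping.keys p. \<Sum>\<kappa>\<in>PiE UNIV (\<lambda>i. {..\<beta> i}).
     Poly_Mapping.single (JJ \<beta> \<kappa>) (Poly_Mapping.lookup p \<beta> * of_nat (Cb \<beta> \<kappa>)))"
  unfolding shifted_def prod_binom_var mp_const_def
  by (simp add: sum_distrib_left mult_single)


definition b0 :: "('v + 'v \<Rightarrow> nat) \<Rightarrow> 'v \<Rightarrow> nat" where "b0 \<gamma> = (\<lambda>i. \<gamma> (Inl i) + \<gamma> (Inr i))"
definition k0 :: "('v + 'v \<Rightarrow> nat) \<Rightarrow> 'v \<Rightarrow> nat" where "k0 \<gamma> = (\<lambda>i. \<gamma> (Inl i))"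

lemma JJ_eq_iff: "(\<forall>i. \<kappa> i \<le> \<beta> i) \<Longrightarrow> JJ \<beta> \<kappa> = \<gamma> \<longleftrightarrow> \<beta> = b0 \<gamma> \<and> \<kappa> = k0 \<gamma>"
proof
  assume le: "\<forall>i. \<kappa> i \<le> \<beta> i" and e: "JJ \<beta> \<kappa> = \<gamma>"
  have 1: "\<kappa> i = \<gamma> (Inl i)" for i using e[unfolded JJ_def fun_eq_iff, rule_format, of "Inl i"] by simp
  have 2: "\<beta> i - \<kappa> i = \<gamma> (Inr i)" for i using e[unfolded JJ_def fun_eq_iff, rule_format, of "Inr i"] by simp
  show "\<beta> = b0 \<gamma> \<and> \<kappa> = k0 \<gamma>"
    using 1 2 le by (auto simp: b0_def k0_def fun_eq_iff) (metis add.commute le_add_diff_inverse)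
next
  assume "\<beta> = b0 \<gamma> \<and> \<kappa> = k0 \<gamma>"
  then show "JJ \<beta> \<kappa> = \<gamma>"
    by (auto simp: JJ_def b0_def k0_def fun_eq_iff split: sum.split)
qed

lemma lookup_shifted: "Poly_Mapping.lookup (shifted (p :: ('v::finite, 'a::comm_ring_1) mpoly)) \<gamma>
   = Poly_Mapping.lookup p (b0 \<gamma>) * of_nat (Cb (b0 \<gamma>) (k0 \<gamma>))"
proof -
  have inner: "(\<Sum>\<kappa>\<in>PiE UNIV (\<lambda>i. {..\<beta> i}).
      Poly_Mapping.lookup (Poly_Mapping.single (JJ \<beta> \<kappa>) (Poly_Mapping.lookup p \<beta> * of_nat (Cb \<beta> \<kappa>))) \<gamma>)
    = (if \<beta> = b0 \<gamma> then Poly_Mapping.lookup p \<beta> * of_nat (Cb \<beta> (k0 \<gamma>)) else 0)" for \<beta>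
  proof -
    have "(\<Sum>\<kappa>\<in>PiE UNIV (\<lambda>i. {..\<beta> i}).
      Poly_Mapping.lookup (Poly_Mapping.single (JJ \<beta> \<kappa>) (Poly_Mapping.lookup p \<beta> * of_nat (Cb \<beta> \<kappa>))) \<gamma>)
      = (\<Sum>\<kappa>\<in>PiE UNIV (\<lambda>i. {..\<beta> i}). if \<beta> = b0 \<gamma> \<and> \<kappa> = k0 \<gamma> then Poly_Mapping.lookup p \<beta> * of_nat (Cb \<beta> \<kappa>) else 0)"
    proof (rule sum.cong[OF refl])
      fix \<kappa> assume "\<kappa> \<in> PiE UNIV (\<lambda>i. {..\<beta> i})"
      then have "\<forall>i. \<kappa> i \<le> \<beta> i" by (auto simp: PiE_def Pi_def)
      then show "Poly_Mapping.lookup (Poly_Mapping.single (JJ \<beta> \<kappa>) (Poly_Mapping.lookup p \<beta> * of_nat (Cb \<beta> \<kappa>))) \<gamma>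
        = (if \<beta> = b0 \<gamma> \<and> \<kappa> = k0 \<gamma> then Poly_Mapping.lookup p \<beta> * of_nat (Cb \<beta> \<kappa>) else 0)"
        by (simp add: lookup_single JJ_eq_iff when_def)
    qed
    also have "\<dots> = (if \<beta> = b0 \<gamma> then Poly_Mapping.lookup p \<beta> * of_nat (Cb \<beta> (k0 \<gamma>)) else 0)"
    proof (cases "\<beta> = b0 \<gamma>")
      case True
      have "k0 \<gamma> \<in> PiE UNIV (\<lambda>i. {..\<beta> i})" using True by (auto simp: k0_def b0_def PiE_def Pi_def)
      have fin: "finite (PiE UNIV (\<lambda>i. {..b0 \<gamma> i}))" by (rule finite_PiE) auto
      show ?thesis using True \<open>k0 \<gamma> \<in> _\<close> by (simp add: fin)
    qed simp
    finally show ?thesis .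
  qed
  have "Poly_Mapping.lookup (shifted p) \<gamma> = (\<Sum>\<beta>\<in>Poly_Mapping.keys p.
     if \<beta> = b0 \<gamma> then Poly_Mapping.lookup p \<beta> * of_nat (Cb \<beta> (k0 \<gamma>)) else 0)"
    unfolding shifted_expand lookup_sum inner by (rule refl)
  also have "\<dots> = Poly_Mapping.lookup p (b0 \<gamma>) * of_nat (Cb (b0 \<gamma>) (k0 \<gamma>))"
    by (simp add: sum.delta' in_keys_iff)
  finally show ?thesis .
qed


lemma lookup_shift_coeff: "Poly_Mapping.lookup (shift_coeff (p::('v::finite,'a::comm_ring_1) mpoly) q \<alpha>) \<delta>
  = of_nat (Cb (\<alpha> + \<delta>) \<alpha>) * Poly_Mapping.lookup p (\<alpha> + \<delta>)
    - (if \<delta> = 0 then Poly_Mapping.lookup q \<alpha> else (0::'a::comm_ring_1))"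
proof -
  define G :: "'v + 'v \<Rightarrow> nat" where "G = (\<lambda>z. case z of Inl i \<Rightarrow> \<alpha> i | Inr i \<Rightarrow> \<delta> i)"
  define S where "S = {\<gamma>\<in>Poly_Mapping.keys (shifted p). (\<lambda>i. \<gamma> (Inl i)) = \<alpha>}"
  have finS: "finite S" unfolding S_def by simp
  have eqG: "\<gamma> \<in> S \<Longrightarrow> ((\<lambda>i. \<gamma> (Inr i)) = \<delta>) \<longleftrightarrow> \<gamma> = G" for \<gamma>
  proof
    assume "\<gamma> \<in> S" "(\<lambda>i. \<gamma> (Inr i)) = \<delta>"
    then have "\<gamma> (Inl i) = \<alpha> i" "\<gamma> (Inr i) = \<delta> i" for i unfolding S_def by (auto dest: fun_cong)
    then show "\<gamma> = G" unfolding G_def by (intro ext) (simp split: sum.split)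
  next
    assume "\<gamma> = G" then show "(\<lambda>i. \<gamma> (Inr i)) = \<delta>" unfolding G_def by simp
  qed
  have "Poly_Mapping.lookup (\<Sum>\<gamma>\<in>S. Poly_Mapping.single (\<lambda>i. \<gamma> (Inr i)) (Poly_Mapping.lookup (shifted p) \<gamma>)) \<delta>
     = (\<Sum>\<gamma>\<in>S. if \<gamma> = G then Poly_Mapping.lookup (shifted p) \<gamma> else 0)"
    unfolding lookup_sum by (rule sum.cong[OF refl]) (simp add: lookup_single when_def eqG)
  also have "\<dots> = Poly_Mapping.lookup (shifted p) G"
  proof (cases "G \<in> S")
    case False
    then have "G \<notin> Poly_Mapping.keys (shifted p)" unfolding S_def G_def by auto
    then show ?thesis using False finS by (simp add: in_keys_iff)
  qed (simp add: finS)
  also have "\<dots> = of_nat (Cb (\<alpha> + \<delta>) \<alpha>) * Poly_Mapping.lookup p (\<alpha> + \<delta>)"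
  proof -
    have "b0 G = \<alpha> + \<delta>" "k0 G = \<alpha>" by (auto simp: b0_def k0_def G_def fun_eq_iff)
    then show ?thesis by (simp add: lookup_shifted mult.commute)
  qed
  moreover have "Poly_Mapping.lookup (mp_const (Poly_Mapping.lookup q \<alpha>)) \<delta> = (if \<delta> = 0 then Poly_Mapping.lookup q \<alpha> else 0)"
    unfolding mp_const_def lookup_single when_def by auto
  ultimately show ?thesis
    unfolding shift_coeff_def lookup_minus S_def[symmetric] by simp
qed


lemma mp_eval_sup: "finite K \<Longrightarrow> Poly_Mapping.keys f \<subseteq> K \<Longrightarrow>
   mp_eval f v = (\<Sum>a\<in>K. Poly_Mapping.lookup f a * mon_eval v a)"
  unfolding mp_eval_def by (rule sum.mono_neutral_left) (auto simp: in_keys_iff)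

lemma mon_eval_zero_deg: "mon_deg a = 0 \<Longrightarrow> mon_eval v a = 1"
  unfolding mon_deg_def mon_eval_def by simp

lemma mon_eval_0 [simp]: "mon_eval v 0 = 1"
  unfolding mon_eval_def by simp

lemma mon_deg_0_iff: "mon_deg (a::'v::finite \<Rightarrow> nat) = 0 \<longleftrightarrow> a = 0"
  unfolding mon_deg_def by (auto simp: fun_eq_iff)

lemma lookup_hom_comp: "Poly_Mapping.lookup (hom_comp k f) a = (if mon_deg a = k then Poly_Mapping.lookup f a else 0)"
proof -
  have "Poly_Mapping.lookup (hom_comp k f) a = (\<Sum>\<alpha>\<in>{\<alpha> \<in> Poly_Mapping.keys f. mon_deg \<alpha> = k}. if \<alpha> = a then Poly_Mapping.lookup f \<alpha> else 0)"
    unfolding hom_comp_def lookup_sum by (rule sum.cong) (auto simp: lookup_single when_def)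
  also have "\<dots> = (if mon_deg a = k then Poly_Mapping.lookup f a else 0)"
    by (auto simp: sum.delta' in_keys_iff)
  finally show ?thesis .
qed

lemma keys_hom_comp: "Poly_Mapping.keys (hom_comp k f) \<subseteq> {a\<in>Poly_Mapping.keys f. mon_deg a = k}"
  by (auto simp: in_keys_iff lookup_hom_comp split: if_splits)

lemma eval_hom_comp: "mp_eval (hom_comp k f) v = (\<Sum>a\<in>{a\<in>Poly_Mapping.keys f. mon_deg a = k}. Poly_Mapping.lookup f a * mon_eval v a)"
  by (subst mp_eval_sup[OF _ keys_hom_comp]) (auto simp: lookup_hom_comp intro!: sum.cong)

lemma eval_by_hom: "finite T \<Longrightarrow> mon_deg ` Poly_Mapping.keys f \<subseteq> T \<Longrightarrow>
   mp_eval f v = (\<Sum>k\<in>T. mp_eval (hom_comp k f) v)"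
proof -
  assume T: "finite T" "mon_deg ` Poly_Mapping.keys f \<subseteq> T"
  have "mp_eval f v = (\<Sum>a\<in>Poly_Mapping.keys f. Poly_Mapping.lookup f a * mon_eval v a)"
    by (simp add: mp_eval_def)
  also have "\<dots> = (\<Sum>k\<in>T. \<Sum>a\<in>{a\<in>Poly_Mapping.keys f. mon_deg a = k}. Poly_Mapping.lookup f a * mon_eval v a)"
    by (rule sum.group[symmetric]) (use T in auto)
  finally show ?thesis unfolding eval_hom_comp .
qed

lemma mp_eval_const [simp]: "mp_eval (mp_const c) v = c"
proof -
  have "mp_eval (mp_const c) v = (\<Sum>a\<in>{0}. Poly_Mapping.lookup (mp_const c) a * mon_eval v a)"
    by (rule mp_eval_sup) (auto simp: mp_const_def)
  then show ?thesis by (simp add: mp_const_def)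
qed

lemma mp_eval_add: "mp_eval (f + g) v = mp_eval f v + mp_eval g v"
proof -
  have K: "finite (Poly_Mapping.keys f \<union> Poly_Mapping.keys g)" by simp
  have "mp_eval (f + g) v = (\<Sum>a\<in>Poly_Mapping.keys f \<union> Poly_Mapping.keys g. Poly_Mapping.lookup (f+g) a * mon_eval v a)"
    by (rule mp_eval_sup[OF K]) (rule keys_add)
  also have "\<dots> = (\<Sum>a\<in>Poly_Mapping.keys f \<union> Poly_Mapping.keys g. Poly_Mapping.lookup f a * mon_eval v a)
     + (\<Sum>a\<in>Poly_Mapping.keys f \<union> Poly_Mapping.keys g. Poly_Mapping.lookup g a * mon_eval v a)"
    by (simp add: lookup_add distrib_right sum.distrib)
  also have "\<dots> = mp_eval f v + mp_eval g v"
    by (subst (1 2) mp_eval_sup[OF K, symmetric]) auto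
  finally show ?thesis .
qed

lemma mp_eval_zero [simp]: "mp_eval 0 v = 0"
  unfolding mp_eval_def by simp

lemma mp_eval_sum: "finite A \<Longrightarrow> mp_eval (\<Sum>i\<in>A. f i) v = (\<Sum>i\<in>A. mp_eval (f i) v)"
  by (induction A rule: finite_induct) (auto simp: mp_eval_add)

lemma deg_le: "a \<in> Poly_Mapping.keys f \<Longrightarrow> mon_deg a \<le> mp_deg f"
  unfolding mp_deg_def by (rule Max_ge) auto

lemma hom0_const: "mp_eval (hom_comp 0 f) v = mp_eval (hom_comp 0 f) s"
  unfolding eval_hom_comp by (rule sum.cong) (auto simp: mon_eval_zero_deg)

lemma eval_linearize: "mp_eval (linearize s (f::('v::finite,'a::comm_ring_1) mpoly)) v
   = mp_eval f s - mp_eval (hom_comp 1 f) s + mp_eval (hom_comp 1 f) v"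
proof -
  define d where "d = mp_deg f"
  have "mp_eval f s = (\<Sum>k\<in>{..max d 1}. mp_eval (hom_comp k f) s)"
    by (rule eval_by_hom) (auto simp: d_def intro: le_trans[OF deg_le])
  also have "{..max d 1} = {0,1} \<union> {2..max d 1}" by auto
  also have "(\<Sum>k\<in>{0,1} \<union> {2..max d 1}. mp_eval (hom_comp k f) s)
     = mp_eval (hom_comp 0 f) s + mp_eval (hom_comp 1 f) s + (\<Sum>k\<in>{2..max d 1}. mp_eval (hom_comp k f) s)"
    by (subst sum.union_disjoint) auto
  also have "{2..max d 1} = {2..d}" by auto
  finally have fs: "mp_eval f s = mp_eval (hom_comp 0 f) s + mp_eval (hom_comp 1 f) s + (\<Sum>k\<in>{2..d}. mp_eval (hom_comp k f) s)" .
  have "mp_eval (linearize s f) v = mp_eval (hom_comp 0 f) v + mp_eval (hom_comp 1 f) v + (\<Sum>k\<in>{2..d}. mp_eval (hom_comp k f) s)"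
    unfolding linearize_def d_def by (simp add: mp_eval_add mp_eval_sum)
  then show ?thesis using fs hom0_const[of f v s] by (simp add: algebra_simps)
qed

lemma eval_deg1: "mp_deg f \<le> 1 \<Longrightarrow> mp_eval f v = mp_eval (hom_comp 0 f) v + mp_eval (hom_comp 1 f) v"
proof -
  assume "mp_deg f \<le> 1"
  then have "mp_eval f v = (\<Sum>k\<in>{..1}. mp_eval (hom_comp k f) v)"
    by (intro eval_by_hom) (auto intro: le_trans[OF deg_le])
  also have "{..1::nat} = {0,1}" by auto
  finally show ?thesis by simp
qed


definition Nb :: "('v::finite, 'a::zero) mpoly \<Rightarrow> nat" where
  "Nb p = Max (insert 0 ((\<lambda>(\<beta>,i). \<beta> i) ` (Poly_Mapping.keys p \<times> UNIV)))"

lemma Nb_ge: "\<beta> \<in> Poly_Mapping.keys p \<Longrightarrow> \<beta> i \<le> Nb p"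
  unfolding Nb_def by (rule Max_ge) force+

lemma lookup_big: "Nb p < x i \<Longrightarrow> Poly_Mapping.lookup p x = 0"
  using Nb_ge[of x p i] by (auto simp: in_keys_iff)

definition Db :: "('v::finite, 'a::zero) mpoly \<Rightarrow> ('v \<Rightarrow> nat) set" where
  "Db p = {\<delta>. \<forall>i. \<delta> i \<le> Nb p}"

lemma finite_Db [simp]: "finite (Db (p::('v::finite,'a::zero) mpoly))"
proof -
  have "Db p \<subseteq> PiE UNIV (\<lambda>_. {..Nb p})" by (auto simp: Db_def PiE_def Pi_def)
  moreover have "finite (PiE (UNIV::'v set) (\<lambda>_. {..Nb p}))" by (rule finite_PiE) auto
  ultimately show ?thesis by (rule finite_subset)
qed

lemma zero_Db [simp]: "0 \<in> Db p" by (simp add: Db_def)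

lemma lookup_out: "\<delta> \<notin> Db p \<Longrightarrow> Poly_Mapping.lookup p (\<alpha> + \<delta>) = 0"
  by (rule lookup_big[where i="SOME i. \<delta> i > Nb p"]) (auto simp: Db_def not_le intro: someI2 le_trans)

lemma keys_sc: "Poly_Mapping.keys (shift_coeff (p::('v::finite,'a::comm_ring_1) mpoly) q \<alpha>) \<subseteq> Db p"
proof
  fix \<delta> assume "\<delta> \<in> Poly_Mapping.keys (shift_coeff p q \<alpha>)"
  then have "Poly_Mapping.lookup (shift_coeff p q \<alpha>) \<delta> \<noteq> 0" by (simp add: in_keys_iff)
  then show "\<delta> \<in> Db p" using lookup_out[of \<delta> p \<alpha>] by (auto simp: lookup_shift_coeff split: if_splits)
qed

definition PP :: "('v::finite, 'a::comm_ring_1) mpoly \<Rightarrow> ('v \<Rightarrow> nat) \<Rightarrow> ('v \<Rightarrow> 'a) \<Rightarrow> 'a" where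
  "PP p \<alpha> v = (\<Sum>\<delta>\<in>Db p. of_nat (Cb (\<alpha> + \<delta>) \<alpha>) * Poly_Mapping.lookup p (\<alpha> + \<delta>) * mon_eval v \<delta>)"

definition Lin :: "('v::finite, 'a::comm_ring_1) mpoly \<Rightarrow> ('v \<Rightarrow> nat) \<Rightarrow> ('v \<Rightarrow> 'a) \<Rightarrow> 'a" where
  "Lin p \<alpha> v = (\<Sum>\<delta>\<in>{\<delta>\<in>Db p. mon_deg \<delta> = 1}. of_nat (Cb (\<alpha> + \<delta>) \<alpha>) * Poly_Mapping.lookup p (\<alpha> + \<delta>) * mon_eval v \<delta>)"

lemma eval_sc: "mp_eval (shift_coeff p q \<alpha>) v = PP p \<alpha> v - Poly_Mapping.lookup q \<alpha>"
proof -
  have "mp_eval (shift_coeff p q \<alpha>) v = (\<Sum>\<delta>\<in>Db p. Poly_Mapping.lookup (shift_coeff p q \<alpha>) \<delta> * mon_eval v \<delta>)"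
    by (rule mp_eval_sup[OF finite_Db keys_sc])
  also have "\<dots> = PP p \<alpha> v - (\<Sum>\<delta>\<in>Db p. (if \<delta> = 0 then Poly_Mapping.lookup q \<alpha> else 0) * mon_eval v \<delta>)"
    unfolding lookup_shift_coeff PP_def left_diff_distrib sum_subtractf by simp
  also have "(\<Sum>\<delta>\<in>Db p. (if \<delta> = 0 then Poly_Mapping.lookup q \<alpha> else 0) * mon_eval v \<delta>) = Poly_Mapping.lookup q \<alpha>"
    by (simp add: if_distrib[of "\<lambda>x. x * _"] sum.delta cong: if_cong)
  finally show ?thesis .
qed

lemma eval_sc_hom1: "mp_eval (hom_comp 1 (shift_coeff p q \<alpha>)) v = Lin p \<alpha> v"
proof -
  have "mp_eval (hom_comp 1 (shift_coeff p q \<alpha>)) v = (\<Sum>\<delta>\<in>{\<delta>\<in>Db p. mon_deg \<delta> = 1}. Poly_Mapping.lookup (hom_comp 1 (shift_coeff p q \<alpha>)) \<delta> * mon_eval v \<delta>)"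
    by (rule mp_eval_sup) (use keys_hom_comp keys_sc in fastforce)+
  also have "\<dots> = Lin p \<alpha> v"
    unfolding Lin_def
  proof (rule sum.cong[OF refl])
    fix \<delta> assume "\<delta> \<in> {\<delta> \<in> Db p. mon_deg \<delta> = 1}"
    then have "mon_deg \<delta> = 1" "\<delta> \<noteq> 0" using mon_deg_0_iff[of \<delta>] by auto
    then show "Poly_Mapping.lookup (hom_comp 1 (shift_coeff p q \<alpha>)) \<delta> * mon_eval v \<delta> =
         of_nat (Cb (\<alpha> + \<delta>) \<alpha>) * Poly_Mapping.lookup p (\<alpha> + \<delta>) * mon_eval v \<delta>"
      by (simp add: lookup_hom_comp lookup_shift_coeff)
  qed
  finally show ?thesis .
qed




lemma mon_eval_scale: "mon_eval (\<lambda>i. t * w i) \<delta> = t ^ mon_deg \<delta> * mon_eval w (\<delta>::'v::finite \<Rightarrow> nat)"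
  unfolding mon_eval_def mon_deg_def by (simp add: power_mult_distrib prod.distrib power_sum)

lemma deg1_ex: "mon_deg (\<delta>::'v::finite \<Rightarrow> nat) = 1 \<Longrightarrow> \<exists>i. \<delta> = (\<lambda>j. if j = i then 1 else 0)"
proof -
  assume d: "mon_deg \<delta> = 1"
  then obtain i where i: "\<delta> i \<noteq> 0" unfolding mon_deg_def by (metis sum.neutral zero_neq_one)
  have "\<delta> i + (\<Sum>j\<in>UNIV - {i}. \<delta> j) = 1" using d unfolding mon_deg_def
    by (simp add: sum.remove[of UNIV i])
  then have "\<delta> i = 1" "(\<Sum>j\<in>UNIV - {i}. \<delta> j) = 0" using i by linarith+
  then have "\<delta> j = (if j = i then 1 else 0)" for j by (cases "j = i") auto
  then show ?thesis by blast
qed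

lemma mon_eval_unit: "mon_eval v (\<lambda>j. if j = i then 1 else 0) = v (i::'v::finite)"
  unfolding mon_eval_def by (simp add: if_distrib[of "\<lambda>n. _ ^ n"] prod.delta cong: if_cong)

lemma mon_eval_deg1_add: "mon_deg \<delta> = 1 \<Longrightarrow> mon_eval (v + w) \<delta> = mon_eval v \<delta> + mon_eval w (\<delta>::'v::finite \<Rightarrow> nat)"
proof -
  assume "mon_deg \<delta> = 1"
  then obtain i where "\<delta> = (\<lambda>j. if j = i then 1 else 0)" using deg1_ex by blast
  then show ?thesis by (simp add: mon_eval_unit)
qed

lemma mon_eval_deg1_diff: "mon_deg \<delta> = 1 \<Longrightarrow> mon_eval (v - w) \<delta> = mon_eval v \<delta> - mon_eval (w::'v\<Rightarrow>'a::comm_ring_1) (\<delta>::'v::finite \<Rightarrow> nat)"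
proof -
  assume "mon_deg \<delta> = 1"
  then obtain i where "\<delta> = (\<lambda>j. if j = i then 1 else 0)" using deg1_ex by blast
  then show ?thesis by (simp add: mon_eval_unit)
qed

lemma Lin_add: "Lin p \<alpha> (v + w) = Lin p \<alpha> v + Lin p \<alpha> w"
  unfolding Lin_def by (simp add: mon_eval_deg1_add distrib_left sum.distrib)

lemma Lin_diff: "Lin p \<alpha> (v - w) = Lin p \<alpha> v - Lin p \<alpha> w"
  unfolding Lin_def by (simp add: mon_eval_deg1_diff right_diff_distrib sum_subtractf)

lemma Lin_scale: "Lin p \<alpha> (\<lambda>i. t * w i) = t * Lin p \<alpha> w"
  unfolding Lin_def by (simp add: mon_eval_scale sum_distrib_left algebra_simps)

lemma Cb_self [simp]: "Cb \<alpha> \<alpha> = 1"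
  unfolding Cb_def by simp

lemma Cb_add0 [simp]: "Cb (\<alpha> + 0) \<alpha> = 1"
  by simp

lemma Cb_mult: "\<gamma> \<le> \<delta> \<Longrightarrow> Cb (\<alpha> + \<delta>) \<alpha> * Cb \<delta> \<gamma> = Cb (\<alpha> + \<gamma>) \<alpha> * Cb (\<alpha> + \<delta>) (\<alpha> + (\<gamma>::'v::finite\<Rightarrow>nat))"
proof -
  assume le: "\<gamma> \<le> \<delta>"
  have "(\<alpha> i + \<delta> i choose \<alpha> i) * (\<delta> i choose \<gamma> i) = (\<alpha> i + \<gamma> i choose \<alpha> i) * (\<alpha> i + \<delta> i choose (\<alpha> i + \<gamma> i))" for i
  proof -
    have g: "\<gamma> i \<le> \<delta> i" using le by (simp add: le_fun_def)
    have "(\<alpha> i + \<delta> i choose (\<alpha> i + \<gamma> i)) * (\<alpha> i + \<gamma> i choose \<alpha> i) = (\<alpha> i + \<delta> i choose \<alpha> i) * ((\<alpha> i + \<delta> i - \<alpha> i) choose (\<alpha> i + \<gamma> i - \<alpha> i))"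
      by (rule choose_mult) (use g in auto)
    then show ?thesis by (simp add: mult.commute)
  qed
  then show ?thesis unfolding Cb_def by (simp add: prod.distrib[symmetric])
qed

lemma mon_eval_binom: "mon_eval (a + b) \<delta> = (\<Sum>\<gamma>\<in>PiE UNIV (\<lambda>i. {..\<delta> i}). of_nat (Cb \<delta> \<gamma>) * mon_eval b \<gamma> * mon_eval a (\<delta> - \<gamma>))
   " for a b :: "'v::finite \<Rightarrow> 'a::comm_semiring_1"
proof -
  have "mon_eval (a + b) \<delta> = (\<Prod>i\<in>UNIV. \<Sum>k\<le>\<delta> i. of_nat (\<delta> i choose k) * b i ^ k * a i ^ (\<delta> i - k))"
  proof -
    have "(a i + b i) ^ n = (\<Sum>k\<le>n. of_nat (n choose k) * b i ^ k * a i ^ (n - k))" for i n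
      by (subst add.commute) (rule binomial_ring)
    then show ?thesis unfolding mon_eval_def by simp
  qed
  also have "\<dots> = (\<Sum>\<gamma>\<in>PiE UNIV (\<lambda>i. {..\<delta> i}). \<Prod>i\<in>UNIV. of_nat (\<delta> i choose \<gamma> i) * b i ^ \<gamma> i * a i ^ (\<delta> i - \<gamma> i))"
    by (rule prod_sum_PiE) auto
  also have "\<dots> = (\<Sum>\<gamma>\<in>PiE UNIV (\<lambda>i. {..\<delta> i}). of_nat (Cb \<delta> \<gamma>) * mon_eval b \<gamma> * mon_eval a (\<delta> - \<gamma>))"
    unfolding Cb_def mon_eval_def by (simp add: prod.distrib of_nat_prod)
  finally show ?thesis .
qed


lemma PiE_le: "PiE UNIV (\<lambda>i. {..\<delta> i}) = {\<gamma>. \<gamma> \<le> (\<delta>::'v \<Rightarrow> nat)}"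
  by (auto simp: PiE_def Pi_def le_fun_def)

lemma le_Db: "\<delta> \<in> Db p \<Longrightarrow> \<gamma> \<le> \<delta> \<Longrightarrow> \<gamma> \<in> Db p"
  by (auto simp: Db_def le_fun_def intro: le_trans)

lemma taylor: "PP p \<alpha> (a + b) = (\<Sum>\<gamma>\<in>Db p. of_nat (Cb (\<alpha> + \<gamma>) \<alpha>) * PP p (\<alpha> + \<gamma>) a * mon_eval b \<gamma>)"
  for p :: "('v::finite, 'a::comm_ring_1) mpoly"
proof -
  define D where "D = Db p"
  define c where "c = Poly_Mapping.lookup p"
  define G where "G = (\<lambda>\<delta> \<gamma>. of_nat (Cb (\<alpha> + \<gamma>) \<alpha> * Cb (\<alpha> + \<delta>) (\<alpha> + \<gamma>)) * c (\<alpha> + \<delta>) * mon_eval b \<gamma> * mon_eval a (\<delta> - \<gamma>))"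
  define F where "F = (\<lambda>\<gamma> \<eta>. of_nat (Cb (\<alpha> + \<gamma>) \<alpha>) * of_nat (Cb (\<alpha> + \<gamma> + \<eta>) (\<alpha> + \<gamma>)) * c (\<alpha> + \<gamma> + \<eta>) * mon_eval a \<eta> * mon_eval b \<gamma>)"
  have fD: "finite D" by (simp add: D_def)
  have "PP p \<alpha> (a + b) = (\<Sum>\<delta>\<in>D. \<Sum>\<gamma>\<in>{\<gamma>\<in>D. \<gamma> \<le> \<delta>}. G \<delta> \<gamma>)"
    unfolding PP_def D_def[symmetric]
  proof (rule sum.cong[OF refl])
    fix \<delta> assume d: "\<delta> \<in> D"
    have s: "PiE UNIV (\<lambda>i. {..\<delta> i}) = {\<gamma>\<in>D. \<gamma> \<le> \<delta>}"
      unfolding PiE_le using d le_Db by (auto simp: D_def)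
    show "of_nat (Cb (\<alpha> + \<delta>) \<alpha>) * Poly_Mapping.lookup p (\<alpha> + \<delta>) * mon_eval (a + b) \<delta> = (\<Sum>\<gamma>\<in>{\<gamma>\<in>D. \<gamma> \<le> \<delta>}. G \<delta> \<gamma>)"
      unfolding mon_eval_binom s sum_distrib_left
    proof (rule sum.cong[OF refl])
      fix \<gamma> assume "\<gamma> \<in> {\<gamma>\<in>D. \<gamma> \<le> \<delta>}"
      then have "Cb (\<alpha> + \<delta>) \<alpha> * Cb \<delta> \<gamma> = Cb (\<alpha> + \<gamma>) \<alpha> * Cb (\<alpha> + \<delta>) (\<alpha> + \<gamma>)" by (simp add: Cb_mult)
      then have "(of_nat (Cb (\<alpha> + \<delta>) \<alpha>) :: 'a) * of_nat (Cb \<delta> \<gamma>) = of_nat (Cb (\<alpha> + \<gamma>) \<alpha> * Cb (\<alpha> + \<delta>) (\<alpha> + \<gamma>))"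
        by (metis of_nat_mult)
      note h = this
      have "of_nat (Cb (\<alpha> + \<delta>) \<alpha>) * Poly_Mapping.lookup p (\<alpha> + \<delta>) * (of_nat (Cb \<delta> \<gamma>) * mon_eval b \<gamma> * mon_eval a (\<delta> - \<gamma>))
          = ((of_nat (Cb (\<alpha> + \<delta>) \<alpha>) :: 'a) * of_nat (Cb \<delta> \<gamma>)) * (Poly_Mapping.lookup p (\<alpha> + \<delta>) * mon_eval b \<gamma> * mon_eval a (\<delta> - \<gamma>))"
        by (simp only: ac_simps)
      also have "\<dots> = of_nat (Cb (\<alpha> + \<gamma>) \<alpha> * Cb (\<alpha> + \<delta>) (\<alpha> + \<gamma>)) * (Poly_Mapping.lookup p (\<alpha> + \<delta>) * mon_eval b \<gamma> * mon_eval a (\<delta> - \<gamma>))"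
        by (simp only: h)
      also have "\<dots> = G \<delta> \<gamma>" unfolding G_def c_def by (simp only: ac_simps)
      finally show "of_nat (Cb (\<alpha> + \<delta>) \<alpha>) * Poly_Mapping.lookup p (\<alpha> + \<delta>) * (of_nat (Cb \<delta> \<gamma>) * mon_eval b \<gamma> * mon_eval a (\<delta> - \<gamma>)) = G \<delta> \<gamma>" .
    qed
  qed
  also have "\<dots> = (\<Sum>(\<delta>,\<gamma>)\<in>Sigma D (\<lambda>\<delta>. {\<gamma>\<in>D. \<gamma> \<le> \<delta>}). G \<delta> \<gamma>)"
    by (rule sum.Sigma) (auto simp: fD)
  also have "\<dots> = (\<Sum>(\<gamma>,\<eta>)\<in>{x\<in>D \<times> D. fst x + snd x \<in> D}. F \<gamma> \<eta>)"
  proof (rule sum.reindex_bij_witness[where j="\<lambda>(\<delta>,\<gamma>). (\<gamma>, \<delta> - \<gamma>)" and i="\<lambda>(\<gamma>,\<eta>). (\<gamma> + \<eta>, \<gamma>)"])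
    fix x assume "x \<in> Sigma D (\<lambda>\<delta>. {\<gamma>\<in>D. \<gamma> \<le> \<delta>})"
    then obtain \<delta> \<gamma> where x: "x = (\<delta>,\<gamma>)" "\<delta> \<in> D" "\<gamma> \<in> D" "\<gamma> \<le> \<delta>" by auto
    have e: "\<gamma> + (\<delta> - \<gamma>) = \<delta>" using x(4) by (auto simp: le_fun_def fun_eq_iff)
    show "(case case x of (\<delta>, \<gamma>) \<Rightarrow> (\<gamma>, \<delta> - \<gamma>) of (\<gamma>, \<eta>) \<Rightarrow> (\<gamma> + \<eta>, \<gamma>)) = x"
      using x e by simp
    show "(case x of (\<delta>, \<gamma>) \<Rightarrow> (\<gamma>, \<delta> - \<gamma>)) \<in> {x \<in> D \<times> D. fst x + snd x \<in> D}"
      using x e le_Db[of \<delta> p "\<delta> - \<gamma>"] by (auto simp: D_def le_fun_def)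
    show "(case case x of (\<delta>, \<gamma>) \<Rightarrow> (\<gamma>, \<delta> - \<gamma>) of (\<gamma>, \<eta>) \<Rightarrow> F \<gamma> \<eta>) = (case x of (\<delta>, \<gamma>) \<Rightarrow> G \<delta> \<gamma>)"
    proof -
      have "\<alpha> + \<gamma> + (\<delta> - \<gamma>) = \<alpha> + \<delta>" using e by (simp add: add.assoc)
      then show ?thesis using x unfolding F_def G_def by (simp add: algebra_simps)
    qed
  next
    fix y assume "y \<in> {x \<in> D \<times> D. fst x + snd x \<in> D}"
    then obtain \<gamma> \<eta> where y: "y = (\<gamma>,\<eta>)" "\<gamma> \<in> D" "\<eta> \<in> D" "\<gamma> + \<eta> \<in> D" by auto
    show "(case case y of (\<gamma>, \<eta>) \<Rightarrow> (\<gamma> + \<eta>, \<gamma>) of (\<delta>, \<gamma>) \<Rightarrow> (\<gamma>, \<delta> - \<gamma>)) = y"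
      using y by (auto simp: fun_eq_iff)
    show "(case y of (\<gamma>, \<eta>) \<Rightarrow> (\<gamma> + \<eta>, \<gamma>)) \<in> Sigma D (\<lambda>\<delta>. {\<gamma> \<in> D. \<gamma> \<le> \<delta>})"
      using y by (auto simp: le_fun_def)
  qed
  also have "\<dots> = (\<Sum>(\<gamma>,\<eta>)\<in>D \<times> D. F \<gamma> \<eta>)"
  proof (rule sum.mono_neutral_left)
    show "finite (D \<times> D)" using fD by simp
    show "{x \<in> D \<times> D. fst x + snd x \<in> D} \<subseteq> D \<times> D" by auto
    show "\<forall>i\<in>D \<times> D - {x \<in> D \<times> D. fst x + snd x \<in> D}. (case i of (\<gamma>, \<eta>) \<Rightarrow> F \<gamma> \<eta>) = 0"
    proof
      fix x assume "x \<in> D \<times> D - {x \<in> D \<times> D. fst x + snd x \<in> D}"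
      then obtain \<gamma> \<eta> where "x = (\<gamma>,\<eta>)" "\<gamma> + \<eta> \<notin> D" by auto
      moreover have "c (\<alpha> + \<gamma> + \<eta>) = 0" using lookup_out[of "\<gamma> + \<eta>" p \<alpha>] \<open>\<gamma> + \<eta> \<notin> D\<close>
        by (simp add: D_def c_def add.assoc)
      ultimately show "(case x of (\<gamma>, \<eta>) \<Rightarrow> F \<gamma> \<eta>) = 0" by (simp add: F_def)
    qed
  qed
  also have "\<dots> = (\<Sum>\<gamma>\<in>D. \<Sum>\<eta>\<in>D. F \<gamma> \<eta>)"
    by (rule sum.cartesian_product[symmetric])
  also have "\<dots> = (\<Sum>\<gamma>\<in>Db p. of_nat (Cb (\<alpha> + \<gamma>) \<alpha>) * PP p (\<alpha> + \<gamma>) a * mon_eval b \<gamma>)"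
    unfolding D_def PP_def F_def c_def
    by (simp add: sum_distrib_left sum_distrib_right algebra_simps)
  finally show ?thesis .
qed


lemma less_add_fun: "(\<alpha>::'v \<Rightarrow> nat) < \<alpha> + \<gamma> \<longleftrightarrow> \<gamma> \<noteq> 0"
proof -
  have a: "\<alpha> \<le> \<alpha> + \<gamma>" by (simp add: le_fun_def)
  have b: "(\<alpha> + \<gamma> \<le> \<alpha>) \<longleftrightarrow> \<gamma> = 0" unfolding le_fun_def fun_eq_iff by auto
  show ?thesis using a b by (simp add: less_le_not_le)
qed

lemma Cb_swap: "Cb (\<alpha> + \<gamma>) \<alpha> * Cb (\<alpha> + \<gamma> + \<eta>) (\<alpha> + \<gamma>) = Cb (\<alpha> + \<eta>) \<alpha> * Cb (\<alpha> + \<eta> + \<gamma>) (\<alpha> + (\<eta>::'v::finite\<Rightarrow>nat))"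
proof -
  have 1: "Cb (\<alpha> + (\<gamma> + \<eta>)) \<alpha> * Cb (\<gamma> + \<eta>) \<gamma> = Cb (\<alpha> + \<gamma>) \<alpha> * Cb (\<alpha> + (\<gamma> + \<eta>)) (\<alpha> + \<gamma>)"
    by (rule Cb_mult) (simp add: le_fun_def)
  have 2: "Cb (\<alpha> + (\<gamma> + \<eta>)) \<alpha> * Cb (\<gamma> + \<eta>) \<eta> = Cb (\<alpha> + \<eta>) \<alpha> * Cb (\<alpha> + (\<gamma> + \<eta>)) (\<alpha> + \<eta>)"
    by (rule Cb_mult) (simp add: le_fun_def)
  have 3: "Cb (\<gamma> + \<eta>) \<gamma> = Cb (\<gamma> + \<eta>) \<eta>"
    unfolding Cb_def by (rule prod.cong[OF refl]) (metis add_diff_cancel_left' binomial_symmetric le_add1 plus_fun_apply)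
  have "\<alpha> + \<gamma> + \<eta> = \<alpha> + (\<gamma> + \<eta>)" "\<alpha> + \<eta> + \<gamma> = \<alpha> + (\<gamma> + \<eta>)" by (simp_all add: ac_simps)
  then show ?thesis using 1 2 3 by simp
qed

lemma poly_vanish_coeffs:
  fixes r :: "nat \<Rightarrow> 'a::field_char_0"
  assumes "finite T" and "\<And>u. (\<Sum>k\<in>T. r k * u ^ k) = 0"
  shows "k \<in> T \<Longrightarrow> r k = 0"
proof -
  define Q where "Q = (\<Sum>k\<in>T. monom (r k) k)"
  have "poly Q u = 0" for u
    using assms(2)[of u] unfolding Q_def by (simp add: poly_sum poly_monom)
  then have "Q = 0" using poly_all_0_iff_0 by blast
  moreover assume "k \<in> T"
  then have "coeff Q k = r k" unfolding Q_def using assms(1) by (simp add: coeff_sum)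
  ultimately show ?thesis by simp
qed


lemma mon_deg_zero [simp]: "mon_deg (0::'v::finite\<Rightarrow>nat) = 0"
  by (simp add: mon_deg_def)

lemma key:
  fixes p :: "('v::finite, 'a::field_char_0) mpoly" and qc :: "('v \<Rightarrow> nat) \<Rightarrow> 'a"
  assumes H1: "\<And>\<beta> t. \<alpha> < \<beta> \<Longrightarrow> PP p \<beta> (s + (\<lambda>i. t * w i)) = qc \<beta>"
    and H2: "\<And>\<beta>. \<alpha> < \<beta> \<Longrightarrow> Lin p \<beta> w = 0"
  shows "PP p \<alpha> (s + w) = PP p \<alpha> s + Lin p \<alpha> w"
proof -
  define D where "D = Db p"
  have fD: "finite D" and D0: "0 \<in> D" by (simp_all add: D_def)
  define tw where "tw = (\<lambda>t::'a. (\<lambda>i. t * w i))"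
  define h where "h = (\<lambda>t. PP p \<alpha> (s + tw t))"
  define trm where "trm = (\<lambda>\<gamma>. of_nat (Cb (\<alpha> + \<gamma>) \<alpha>) * qc (\<alpha> + \<gamma>) * mon_eval w \<gamma>)"
  define R where "R = (\<lambda>u. \<Sum>\<gamma>\<in>D - {0}. trm \<gamma> * u ^ mon_deg \<gamma>)"
  have s0: "s + tw 0 = s" by (simp add: tw_def fun_eq_iff)
  have step: "h (t + u) = h t + R u" for t u
  proof -
    have e: "s + tw (t + u) = (s + tw t) + tw u" by (simp add: tw_def fun_eq_iff algebra_simps)
    have "h (t + u) = (\<Sum>\<gamma>\<in>D. of_nat (Cb (\<alpha> + \<gamma>) \<alpha>) * PP p (\<alpha> + \<gamma>) (s + tw t) * mon_eval (tw u) \<gamma>)"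
      unfolding h_def e D_def by (rule taylor[where a="s + tw t" and b="tw u"])
    also have "\<dots> = of_nat (Cb (\<alpha> + 0) \<alpha>) * PP p (\<alpha> + 0) (s + tw t) * mon_eval (tw u) 0
        + (\<Sum>\<gamma>\<in>D - {0}. of_nat (Cb (\<alpha> + \<gamma>) \<alpha>) * PP p (\<alpha> + \<gamma>) (s + tw t) * mon_eval (tw u) \<gamma>)"
      by (rule sum.remove[OF fD D0])
    also have "(\<Sum>\<gamma>\<in>D - {0}. of_nat (Cb (\<alpha> + \<gamma>) \<alpha>) * PP p (\<alpha> + \<gamma>) (s + tw t) * mon_eval (tw u) \<gamma>) = R u"
      unfolding R_def
    proof (rule sum.cong[OF refl])
      fix \<gamma> assume "\<gamma> \<in> D - {0}"
      then have "\<alpha> < \<alpha> + \<gamma>" by (simp add: less_add_fun)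
      then have "PP p (\<alpha> + \<gamma>) (s + tw t) = qc (\<alpha> + \<gamma>)" unfolding tw_def by (rule H1)
      then show "of_nat (Cb (\<alpha> + \<gamma>) \<alpha>) * PP p (\<alpha> + \<gamma>) (s + tw t) * mon_eval (tw u) \<gamma> = trm \<gamma> * u ^ mon_deg \<gamma>"
        unfolding trm_def tw_def mon_eval_scale by (simp add: algebra_simps)
    qed
    finally show ?thesis unfolding h_def by (simp only: add_0_right Cb_self of_nat_1 mult_1_left mult_1_right mon_eval_0)
  qed
  have h0: "h 0 = PP p \<alpha> s" by (simp add: h_def s0)
  have Rdouble: "R (u + u) = R u + R u" for u
  proof -
    have a1: "h (u + u) = h 0 + R (u + u)" using step[of 0 "u + u"] by (simp only: add_0_left)
    have a2: "h (u + u) = h u + R u" by (rule step)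
    have a3: "h u = h 0 + R u" using step[of 0 u] by (simp only: add_0_left)
    show ?thesis using a1 a2 a3 by (metis add.assoc add_left_imp_eq)
  qed
  define T where "T = mon_deg ` (D - {0})"
  have fT: "finite T" using fD by (simp add: T_def)
  define r where "r = (\<lambda>k. \<Sum>\<gamma>\<in>{\<gamma>\<in>D - {0}. mon_deg \<gamma> = k}. trm \<gamma>)"
  have Rr: "R u = (\<Sum>k\<in>T. r k * u ^ k)" for u
  proof -
    have "R u = (\<Sum>k\<in>T. \<Sum>\<gamma>\<in>{\<gamma>\<in>D - {0}. mon_deg \<gamma> = k}. trm \<gamma> * u ^ mon_deg \<gamma>)"
      unfolding R_def by (rule sum.group[symmetric]) (auto simp: fD fT T_def)
    also have "\<dots> = (\<Sum>k\<in>T. r k * u ^ k)"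
      unfolding r_def sum_distrib_right by (rule sum.cong[OF refl], rule sum.cong) auto
    finally show ?thesis .
  qed
  have T1: "k \<in> T \<Longrightarrow> 1 \<le> k" for k
    unfolding T_def using mon_deg_0_iff by fastforce
  have rk: "r k = 0" if "k \<in> T" "k \<noteq> 1" for k
  proof -
    have van: "(\<Sum>k\<in>T. ((2::'a) ^ k - 2) * r k * u ^ k) = 0" for u
    proof -
      have uu: "u + u = 2 * u" by simp
      have a: "R (u + u) = (\<Sum>k\<in>T. r k * (2 ^ k * u ^ k))"
        unfolding Rr uu power_mult_distrib by (rule refl)
      have b: "R u + R u = (\<Sum>k\<in>T. 2 * (r k * u ^ k))"
        unfolding Rr sum_distrib_left[symmetric] by (rule mult_2[symmetric])
      have "(\<Sum>k\<in>T. ((2::'a) ^ k - 2) * r k * u ^ k) = (\<Sum>k\<in>T. r k * (2 ^ k * u ^ k) - 2 * (r k * u ^ k))"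
        by (rule sum.cong[OF refl]) (simp add: algebra_simps)
      also have "\<dots> = R (u + u) - (R u + R u)"
        unfolding a b by (rule sum_subtractf)
      also have "\<dots> = 0" using Rdouble[of u] by (simp only: diff_self)
      finally show ?thesis .
    qed
    have van': "(\<Sum>k\<in>T. ((2::'a) ^ k - 2) * r k * u ^ k) = 0" for u
      by (rule van)
    have "((2::'a) ^ k - 2) * r k = 0"
      by (rule poly_vanish_coeffs[where r="\<lambda>k. ((2::'a) ^ k - 2) * r k", OF fT van' that(1)])
    moreover have "(2::'a) ^ k - 2 \<noteq> 0"
    proof -
      have "2 \<le> k" using T1[OF that(1)] that(2) by simp
      then have "(4::nat) \<le> 2 ^ k" using power_increasing[of 2 k "2::nat"] by simp
      then have "(of_nat (2 ^ k) :: 'a) \<noteq> of_nat 2" by (simp only: of_nat_eq_iff)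
      then show ?thesis by simp
    qed
    ultimately show ?thesis by simp
  qed
  have R1: "R 1 = r 1"
  proof -
    have "R 1 = (\<Sum>k\<in>T. if k = 1 then r k else 0)" unfolding Rr
      by (rule sum.cong[OF refl]) (auto simp: rk)
    also have "\<dots> = r 1"
    proof (cases "1 \<in> T")
      case False
      have "\<forall>\<gamma>\<in>D - {0}. mon_deg \<gamma> \<noteq> 1"
      proof (intro ballI notI)
        fix \<gamma> assume g: "\<gamma> \<in> D - {0}" "mon_deg \<gamma> = 1"
        have "mon_deg \<gamma> \<in> T" unfolding T_def using g(1) by (rule imageI)
        then show False using False g(2) by simp
      qed
      then have E: "{\<gamma>\<in>D - {0}. mon_deg \<gamma> = 1} = {}" by blast
      have "r 1 = 0" unfolding r_def E by simp
      then show ?thesis using False fT by simp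
    qed (simp add: fT)
    finally show ?thesis .
  qed
  define D1 where "D1 = {\<gamma>\<in>D. mon_deg \<gamma> = 1}"
  have fD1: "finite D1" using fD by (simp add: D1_def)
  have r1: "r 1 = (\<Sum>\<gamma>\<in>D1. trm \<gamma>)"
    unfolding r_def D1_def by (rule sum.cong) (auto simp: mon_deg_0_iff)
  have Lin_eq: "Lin p \<alpha> w = (\<Sum>\<gamma>\<in>D1. of_nat (Cb (\<alpha> + \<gamma>) \<alpha>) * Poly_Mapping.lookup p (\<alpha> + \<gamma>) * mon_eval w \<gamma>)"
    by (simp add: Lin_def D1_def D_def)
  have diff0: "(\<Sum>\<gamma>\<in>D1. of_nat (Cb (\<alpha> + \<gamma>) \<alpha>) * (qc (\<alpha> + \<gamma>) - Poly_Mapping.lookup p (\<alpha> + \<gamma>)) * mon_eval w \<gamma>) = 0"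
  proof -
    have q: "qc (\<alpha> + \<gamma>) - Poly_Mapping.lookup p (\<alpha> + \<gamma>) = (\<Sum>\<eta>\<in>D - {0}. of_nat (Cb (\<alpha> + \<gamma> + \<eta>) (\<alpha> + \<gamma>)) * Poly_Mapping.lookup p (\<alpha> + \<gamma> + \<eta>) * mon_eval s \<eta>)"
      if "\<gamma> \<in> D1" for \<gamma>
    proof -
      have "\<gamma> \<noteq> 0" using that mon_deg_0_iff by (force simp: D1_def)
      then have "\<alpha> < \<alpha> + \<gamma>" by (simp add: less_add_fun)
      then have "qc (\<alpha> + \<gamma>) = PP p (\<alpha> + \<gamma>) (s + tw 0)" unfolding tw_def by (rule H1[symmetric])
      also have "\<dots> = PP p (\<alpha> + \<gamma>) s" by (simp add: s0)
      also have "\<dots> = Poly_Mapping.lookup p (\<alpha> + \<gamma>) + (\<Sum>\<eta>\<in>D - {0}. of_nat (Cb (\<alpha> + \<gamma> + \<eta>) (\<alpha> + \<gamma>)) * Poly_Mapping.lookup p (\<alpha> + \<gamma> + \<eta>) * mon_eval s \<eta>)"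
        unfolding PP_def D_def[symmetric] by (subst sum.remove[OF fD D0]) simp
      finally show ?thesis by simp
    qed
    have "(\<Sum>\<gamma>\<in>D1. of_nat (Cb (\<alpha> + \<gamma>) \<alpha>) * (qc (\<alpha> + \<gamma>) - Poly_Mapping.lookup p (\<alpha> + \<gamma>)) * mon_eval w \<gamma>)
      = (\<Sum>\<gamma>\<in>D1. \<Sum>\<eta>\<in>D - {0}. of_nat (Cb (\<alpha> + \<gamma>) \<alpha> * Cb (\<alpha> + \<gamma> + \<eta>) (\<alpha> + \<gamma>)) * Poly_Mapping.lookup p (\<alpha> + \<gamma> + \<eta>) * mon_eval s \<eta> * mon_eval w \<gamma>)"
    proof (rule sum.cong[OF refl])
      fix \<gamma> assume g: "\<gamma> \<in> D1"
      show "of_nat (Cb (\<alpha> + \<gamma>) \<alpha>) * (qc (\<alpha> + \<gamma>) - Poly_Mapping.lookup p (\<alpha> + \<gamma>)) * mon_eval w \<gamma>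
        = (\<Sum>\<eta>\<in>D - {0}. of_nat (Cb (\<alpha> + \<gamma>) \<alpha> * Cb (\<alpha> + \<gamma> + \<eta>) (\<alpha> + \<gamma>)) * Poly_Mapping.lookup p (\<alpha> + \<gamma> + \<eta>) * mon_eval s \<eta> * mon_eval w \<gamma>)"
        unfolding q[OF g] sum_distrib_left sum_distrib_right
        by (rule sum.cong[OF refl]) (simp add: algebra_simps)
    qed
    also have "\<dots> = (\<Sum>\<eta>\<in>D - {0}. \<Sum>\<gamma>\<in>D1. of_nat (Cb (\<alpha> + \<gamma>) \<alpha> * Cb (\<alpha> + \<gamma> + \<eta>) (\<alpha> + \<gamma>)) * Poly_Mapping.lookup p (\<alpha> + \<gamma> + \<eta>) * mon_eval s \<eta> * mon_eval w \<gamma>)"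
      by (rule sum.swap)
    also have "\<dots> = (\<Sum>\<eta>\<in>D - {0}. mon_eval s \<eta> * of_nat (Cb (\<alpha> + \<eta>) \<alpha>) * Lin p (\<alpha> + \<eta>) w)"
    proof (rule sum.cong[OF refl])
      fix \<eta>
      have e: "\<alpha> + \<gamma> + \<eta> = \<alpha> + \<eta> + \<gamma>" for \<gamma> by (simp add: ac_simps)
      show "(\<Sum>\<gamma>\<in>D1. of_nat (Cb (\<alpha> + \<gamma>) \<alpha> * Cb (\<alpha> + \<gamma> + \<eta>) (\<alpha> + \<gamma>)) * Poly_Mapping.lookup p (\<alpha> + \<gamma> + \<eta>) * mon_eval s \<eta> * mon_eval w \<gamma>)
          = mon_eval s \<eta> * of_nat (Cb (\<alpha> + \<eta>) \<alpha>) * Lin p (\<alpha> + \<eta>) w"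
        unfolding Lin_def D_def[symmetric] D1_def[symmetric] sum_distrib_left
      proof (rule sum.cong[OF refl])
        fix \<gamma>
        have c: "Cb (\<alpha> + \<gamma>) \<alpha> * Cb (\<alpha> + \<gamma> + \<eta>) (\<alpha> + \<gamma>) = Cb (\<alpha> + \<eta>) \<alpha> * Cb (\<alpha> + \<eta> + \<gamma>) (\<alpha> + \<eta>)"
          by (rule Cb_swap)
        show "of_nat (Cb (\<alpha> + \<gamma>) \<alpha> * Cb (\<alpha> + \<gamma> + \<eta>) (\<alpha> + \<gamma>)) * Poly_Mapping.lookup p (\<alpha> + \<gamma> + \<eta>) * mon_eval s \<eta> * mon_eval w \<gamma>
          = mon_eval s \<eta> * of_nat (Cb (\<alpha> + \<eta>) \<alpha>) * (of_nat (Cb (\<alpha> + \<eta> + \<gamma>) (\<alpha> + \<eta>)) * Poly_Mapping.lookup p (\<alpha> + \<eta> + \<gamma>) * mon_eval w \<gamma>)"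
          unfolding c unfolding e[of \<gamma>] by (simp add: algebra_simps)
      qed
    qed
    also have "\<dots> = 0"
    proof (rule sum.neutral, rule ballI)
      fix \<eta> assume "\<eta> \<in> D - {0}"
      then have "\<alpha> < \<alpha> + \<eta>" by (simp add: less_add_fun)
      then show "mon_eval s \<eta> * of_nat (Cb (\<alpha> + \<eta>) \<alpha>) * Lin p (\<alpha> + \<eta>) w = 0" by (simp add: H2)
    qed
    finally show ?thesis .
  qed
  have "r 1 = Lin p \<alpha> w"
  proof -
    have "r 1 - Lin p \<alpha> w = (\<Sum>\<gamma>\<in>D1. of_nat (Cb (\<alpha> + \<gamma>) \<alpha>) * (qc (\<alpha> + \<gamma>) - Poly_Mapping.lookup p (\<alpha> + \<gamma>)) * mon_eval w \<gamma>)"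
      unfolding r1 Lin_eq trm_def sum_subtractf[symmetric] by (rule sum.cong[OF refl]) (simp add: algebra_simps)
    then show ?thesis using diff0 by simp
  qed
  moreover have "h 1 = PP p \<alpha> (s + w)" by (simp add: h_def tw_def)
  moreover have "h 1 = h 0 + R 1" using step[of 0 1] by simp
  ultimately show ?thesis using h0 R1 by simp
qed


lemma ev_lin: "mp_eval (linearize s (shift_coeff p q \<alpha>)) v = mp_eval (shift_coeff p q \<alpha>) s + Lin p \<alpha> (v - s)"
  for p :: "('v::finite, 'a::comm_ring_1) mpoly"
  unfolding eval_linearize eval_sc_hom1 Lin_diff by (simp add: algebra_simps)

lemma ev_deg1: "mp_deg (shift_coeff p q \<alpha>) \<le> 1 \<Longrightarrow>
   mp_eval (shift_coeff p q \<alpha>) v = mp_eval (shift_coeff p q \<alpha>) s + Lin p \<alpha> (v - s)"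
  for p :: "('v::finite, 'a::comm_ring_1) mpoly"
proof -
  assume d: "mp_deg (shift_coeff p q \<alpha>) \<le> 1"
  show ?thesis
    unfolding eval_deg1[OF d, of v] eval_deg1[OF d, of s] eval_sc_hom1 Lin_diff
      hom0_const[of _ v s] by (simp add: algebra_simps)
qed

lemma main_claim:
  fixes p q :: "('v::finite, 'a::field_char_0) mpoly"
    and m :: nat and C :: "nat \<Rightarrow> ('v \<Rightarrow> nat) set"
  assumes adm: "admissible_cover p q m C"
  shows "l \<le> m \<Longrightarrow> (\<forall>\<alpha>\<in>(\<Union>i\<in>{0..<l}. C i). mp_eval (shift_coeff p q \<alpha>) s = 0) \<Longrightarrow>
     ((\<forall>\<alpha>\<in>(\<Union>i\<in>{0..l}. C i). mp_eval (shift_coeff p q \<alpha>) v = 0) \<longleftrightarrow>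
      (\<forall>\<alpha>\<in>(\<Union>i\<in>{0..l}. C i). mp_eval (shift_coeff p q \<alpha>) s + Lin p \<alpha> (v - s) = 0))"
proof (induction l arbitrary: s v)
  case 0
  have "\<alpha> \<in> C 0 \<Longrightarrow> mp_eval (shift_coeff p q \<alpha>) v = mp_eval (shift_coeff p q \<alpha>) s + Lin p \<alpha> (v - s)" for \<alpha>
    using adm unfolding admissible_cover_def by (intro ev_deg1) blast
  moreover have U0: "(\<Union>i\<in>{0..0::nat}. C i) = C 0" by simp
  ultimately show ?case unfolding U0 by metis
next
  case (Suc k)
  let ?E = "\<lambda>\<alpha> x. mp_eval (shift_coeff p q \<alpha>) x"
  define U where "U = (\<Union>i\<in>{0..k}. C i)"
  have Ueq: "(\<Union>i\<in>{0..<Suc k}. C i) = U" unfolding U_def by (simp add: atLeastLessThanSuc_atLeastAtMost)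
  have Ueq2: "(\<Union>i\<in>{0..Suc k}. C i) = U \<union> C (Suc k)" unfolding U_def by (auto simp: le_Suc_eq)
  have km: "k \<le> m" using Suc.prems(1) by simp
  have sU: "\<forall>\<alpha>\<in>U. ?E \<alpha> s = 0" using Suc.prems(2) Ueq by simp
  have sU': "\<forall>\<alpha>\<in>(\<Union>i\<in>{0..<k}. C i). ?E \<alpha> s = 0" using sU unfolding U_def by auto
  have IH: "(\<forall>\<alpha>\<in>U. ?E \<alpha> x = 0) \<longleftrightarrow> (\<forall>\<alpha>\<in>U. Lin p \<alpha> (x - s) = 0)" for x
  proof -
    have i1: "(\<forall>\<alpha>\<in>U. ?E \<alpha> x = 0) \<longleftrightarrow> (\<forall>\<alpha>\<in>U. ?E \<alpha> s + Lin p \<alpha> (x - s) = 0)"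
      using Suc.IH[OF km sU', of x] unfolding U_def .
    have i2: "(\<forall>\<alpha>\<in>U. ?E \<alpha> s + Lin p \<alpha> (x - s) = 0) \<longleftrightarrow> (\<forall>\<alpha>\<in>U. Lin p \<alpha> (x - s) = 0)"
      by (rule ball_cong[OF refl]) (use sU in simp)
    show ?thesis using i1 i2 by simp
  qed
  have X: "?E \<alpha> v = ?E \<alpha> s + Lin p \<alpha> (v - s)"
    if B: "\<forall>\<alpha>\<in>U. Lin p \<alpha> (v - s) = 0" and a: "\<alpha> \<in> C (Suc k)" for \<alpha>
  proof -
    define w where "w = v - s"
    have adm3: "\<forall>\<beta>. \<beta> > \<alpha> \<and> shift_coeff p q \<beta> \<noteq> 0 \<longrightarrow> \<beta> \<in> U"
      using adm a Suc.prems(1) Ueq unfolding admissible_cover_def by auto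
    have key_app: "PP p \<alpha> (s + w) = PP p \<alpha> s + Lin p \<alpha> w"
    proof (rule key[where qc="Poly_Mapping.lookup q"])
      fix \<beta> t assume b: "\<alpha> < \<beta>"
      show "PP p \<beta> (s + (\<lambda>i. t * w i)) = Poly_Mapping.lookup q \<beta>"
      proof (cases "shift_coeff p q \<beta> = 0")
        case True
        then have "?E \<beta> (s + (\<lambda>i. t * w i)) = 0" by simp
        then show ?thesis by (simp add: eval_sc)
      next
        case False
        then have bU: "\<beta> \<in> U" using adm3 b by blast
        have "\<forall>\<alpha>'\<in>U. Lin p \<alpha>' ((s + (\<lambda>i. t * w i)) - s) = 0"
        proof
          fix \<alpha>' assume "\<alpha>' \<in> U"
          then have "Lin p \<alpha>' w = 0" using B by (simp add: w_def)
          moreover have "(s + (\<lambda>i. t * w i)) - s = (\<lambda>i. t * w i)" by (simp add: fun_eq_iff)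
          ultimately show "Lin p \<alpha>' ((s + (\<lambda>i. t * w i)) - s) = 0" by (simp add: Lin_scale)
        qed
        then have "?E \<beta> (s + (\<lambda>i. t * w i)) = 0" using IH bU by blast
        then show ?thesis by (simp add: eval_sc)
      qed
    next
      fix \<beta> assume b: "\<alpha> < \<beta>"
      show "Lin p \<beta> w = 0"
      proof (cases "shift_coeff p q \<beta> = 0")
        case True
        have "hom_comp 1 (shift_coeff p q \<beta>) = 0" unfolding True hom_comp_def by simp
        then show ?thesis using eval_sc_hom1[of p q \<beta> w] by simp
      next
        case False
        then have "\<beta> \<in> U" using adm3 b by blast
        then show ?thesis using B by (simp add: w_def)
      qed
    qed
    have "s + w = v" by (simp add: w_def fun_eq_iff)
    then show ?thesis using key_app by (simp add: eval_sc w_def algebra_simps)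
  qed
  show ?case
  proof
    assume A: "\<forall>\<alpha>\<in>(\<Union>i\<in>{0..Suc k}. C i). ?E \<alpha> v = 0"
    then have AU: "\<forall>\<alpha>\<in>U. ?E \<alpha> v = 0" unfolding Ueq2 by blast
    then have B: "\<forall>\<alpha>\<in>U. Lin p \<alpha> (v - s) = 0" using IH by blast
    show "\<forall>\<alpha>\<in>(\<Union>i\<in>{0..Suc k}. C i). ?E \<alpha> s + Lin p \<alpha> (v - s) = 0"
      unfolding Ueq2
    proof
      fix \<alpha> assume "\<alpha> \<in> U \<union> C (Suc k)"
      then show "?E \<alpha> s + Lin p \<alpha> (v - s) = 0"
      proof
        assume "\<alpha> \<in> U" then show ?thesis using sU B by simp
      next
        assume "\<alpha> \<in> C (Suc k)" then show ?thesis using X[OF B] A Ueq2 by auto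
      qed
    qed
  next
    assume A: "\<forall>\<alpha>\<in>(\<Union>i\<in>{0..Suc k}. C i). ?E \<alpha> s + Lin p \<alpha> (v - s) = 0"
    have B: "\<forall>\<alpha>\<in>U. Lin p \<alpha> (v - s) = 0"
    proof
      fix \<alpha> assume a: "\<alpha> \<in> U"
      then have "?E \<alpha> s + Lin p \<alpha> (v - s) = 0" using A Ueq2 by blast
      moreover have "?E \<alpha> s = 0" using sU a by blast
      ultimately show "Lin p \<alpha> (v - s) = 0" by simp
    qed
    then have AU: "\<forall>\<alpha>\<in>U. ?E \<alpha> v = 0" using IH by blast
    show "\<forall>\<alpha>\<in>(\<Union>i\<in>{0..Suc k}. C i). ?E \<alpha> v = 0"
      unfolding Ueq2
    proof
      fix \<alpha> assume "\<alpha> \<in> U \<union> C (Suc k)"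
      then show "?E \<alpha> v = 0"
      proof
        assume "\<alpha> \<in> U" then show ?thesis using AU by simp
      next
        assume "\<alpha> \<in> C (Suc k)" then show ?thesis using X[OF B] A Ueq2 by auto
      qed
    qed
  qed
qed

theorem theorem1p1:
  fixes p q :: "('v::finite, 'a::field_char_0) mpoly"
    and m :: nat and C :: "nat \<Rightarrow> ('v \<Rightarrow> nat) set"
  assumes "admissible_cover p q m C"
  shows "\<forall>l\<in>{0..m}.
           zero_set (shift_coeff p q ` (\<Union>i\<in>{0..<l}. C i)) = {} \<or>
           (\<forall>s\<in>zero_set (shift_coeff p q ` (\<Union>i\<in>{0..<l}. C i)).
              zero_set (shift_coeff p q ` (\<Union>i\<in>{0..l}. C i)) =
              zero_set (\<Union>i\<in>{0..l}. linearize s ` (shift_coeff p q ` C i)))"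
proof (intro ballI disjI2)
  fix l s assume l: "l \<in> {0..m}" and s: "s \<in> zero_set (shift_coeff p q ` (\<Union>i\<in>{0..<l}. C i))"
  have s': "\<forall>\<alpha>\<in>(\<Union>i\<in>{0..<l}. C i). mp_eval (shift_coeff p q \<alpha>) s = 0"
    using s unfolding zero_set_def by blast
  show "zero_set (shift_coeff p q ` (\<Union>i\<in>{0..l}. C i)) =
              zero_set (\<Union>i\<in>{0..l}. linearize s ` (shift_coeff p q ` C i))"
  proof (rule set_eqI)
    fix v
    have "v \<in> zero_set (shift_coeff p q ` (\<Union>i\<in>{0..l}. C i)) \<longleftrightarrow>
        (\<forall>\<alpha>\<in>(\<Union>i\<in>{0..l}. C i). mp_eval (shift_coeff p q \<alpha>) v = 0)"
      unfolding zero_set_def by blast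
    also have "\<dots> \<longleftrightarrow> (\<forall>\<alpha>\<in>(\<Union>i\<in>{0..l}. C i). mp_eval (shift_coeff p q \<alpha>) s + Lin p \<alpha> (v - s) = 0)"
      using main_claim[OF assms _ s'] l by simp
    also have "\<dots> \<longleftrightarrow> v \<in> zero_set (\<Union>i\<in>{0..l}. linearize s ` (shift_coeff p q ` C i))"
      unfolding zero_set_def ev_lin[symmetric] by blast
    finally show "v \<in> zero_set (shift_coeff p q ` (\<Union>i\<in>{0..l}. C i)) \<longleftrightarrow>
        v \<in> zero_set (\<Union>i\<in>{0..l}. linearize s ` (shift_coeff p q ` C i))" .
  qed
qed


end
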